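(* Let $\mu_\xi,\mu_\rho\in\mathbb{R}$, $\sigma_\xi>0$, $\sigma_\rho>0$, and $\kappa_\rho=\mu_\rho+\sigma_\rho^2/2$. Let $\delta>0$. The equation $$(\sigma_\xi^2+\sigma_\rho^2x^2)f''(x)+2(\mu_\xi+\kappa_\rho x)f'(x)-2\delta f(x)=0$$ admits a solution $f:\mathbb{R}_+\to\mathbb{R}$ satisfying property (P): $f(x)>0$ for all $x\in\mathbb{R}_+$ and $f'(x)\le0$ for all $x\in(0,\infty)$. Moreover, if $\mu_\rho\le0$, every other solution $\tilde f$ of this equation satisfying (P) is of the form $\tilde f=Kf$ on $\mathbb{R}_+$ for some constant $K>0$.
   Context: $\mathbb{R}_+=[0,\infty)$. *)

theory Defs
  imports "HOL-Analysis.Analysis"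
begin

definition ode_sol ::
  "real \<Rightarrow> real \<Rightarrow> real \<Rightarrow> real \<Rightarrow> real \<Rightarrow>
   (real \<Rightarrow> real) \<Rightarrow> (real \<Rightarrow> real) \<Rightarrow> (real \<Rightarrow> real) \<Rightarrow> bool" where
  "ode_sol s_xi s_rho mu_xi kappa_rho delta f f' f'' \<longleftrightarrow>
    (\<forall>x\<ge>0. (f has_real_derivative f' x) (at x within {0..}) \<and>
            (f' has_real_derivative f'' x) (at x within {0..}) \<and>
            (s_xi^2 + s_rho^2 * x^2) * f'' x + 2 * (mu_xi + kappa_rho * x) * f' x
              - 2 * delta * f x = 0)"

definition prop_P :: "(real \<Rightarrow> real) \<Rightarrow> (real \<Rightarrow> real) \<Rightarrow> bool" where
  "prop_P f f' \<longleftrightarrow> (\<forall>x\<ge>0. f x > 0) \<and> (\<forall>x>0. f' x \<le> 0)"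

end

theory Submission
  imports Defs
begin



lemma within_to_at:
  fixes h :: "real \<Rightarrow> real"
  assumes "x > 0" "(h has_real_derivative D) (at x within {0..})"
  shows "(h has_real_derivative D) (at x)"
proof -
  have "(h has_real_derivative D) (at x within {0<..})"
    using assms(2) by (rule DERIV_subset) auto
  thus ?thesis using assms(1) by (simp add: at_within_open[of x "{0<..}"])
qed

lemma deriv_cont:
  fixes h :: "real \<Rightarrow> real"
  assumes "\<And>x. x \<ge> 0 \<Longrightarrow> (h has_real_derivative h' x) (at x within {0..})"
  shows "continuous_on {0..} h"
  unfolding continuous_on_eq_continuous_within using DERIV_continuous[OF assms] by auto

lemma deriv_decr:
  fixes h :: "real \<Rightarrow> real"
  assumes "\<And>x. x \<ge> 0 \<Longrightarrow> (h has_real_derivative h' x) (at x within {0..})"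
    and "\<And>x. x > 0 \<Longrightarrow> h' x \<le> 0" and "0 \<le> x"
  shows "h x \<le> h 0"
proof (rule DERIV_nonpos_imp_decreasing_open[OF assms(3)])
  show "continuous_on {0..x} h" using deriv_cont[OF assms(1)] by (rule continuous_on_subset) auto
  fix t assume t: "0 < t" "t < x"
  hence "(h has_real_derivative h' t) (at t)" using within_to_at[of t h "h' t"] assms(1)[of t] by auto
  thus "\<exists>y. (h has_real_derivative y) (at t) \<and> y \<le> 0"
    using assms(2)[of t] t by blast
qed

locale prm =
  fixes c1 c2 mx mr kap dl :: real
  assumes c1: "c1 > 0" and c2: "c2 > 0" and kap: "kap = mr + c2^2/2" and dl: "dl > 0"
begin

definition aa :: "real \<Rightarrow> real" where "aa s = c1^2 + c2^2* s^2"
definition th :: real where "th = 2*mx/(c1*c2)"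
definition BB :: "real \<Rightarrow> real" where "BB x = (kap/c2^2) * ln (aa x) + th * arctan (c2*x/c1)"

lemma aa_pos: "aa s > 0"
  using c1 by (simp add: aa_def add_pos_nonneg)

lemma aa_deriv: "(aa has_real_derivative 2 * c2^2 * x) (at x)"
  unfolding aa_def by (auto intro!: derivative_eq_intros)

lemma ln_aa_deriv: "((\<lambda>x. ln (aa x)) has_real_derivative (2 * c2^2 * x) / aa x) (at x)"
  using aa_pos[of x] by (auto intro!: derivative_eq_intros aa_deriv simp: divide_inverse mult_ac)

lemma arctan_deriv: "((\<lambda>x. arctan (c2 * x / c1)) has_real_derivative (c2/c1) / (1 + (c2 * x / c1)^2)) (at x)"
  by (auto intro!: derivative_eq_intros simp: divide_inverse mult_ac)

lemma BB_deriv: "(BB has_real_derivative (2*(mx + kap * x))/aa x) (at x)"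
proof -
  have "(BB has_real_derivative (kap/c2^2) * ((2 * c2^2 * x) / aa x) + th * ((c2/c1) / (1 + (c2 * x / c1)^2))) (at x)"
    unfolding BB_def by (intro DERIV_add DERIV_cmult ln_aa_deriv arctan_deriv)
  moreover have "(kap/c2^2) * ((2 * c2^2 * x) / aa x) + th * ((c2/c1) / (1 + (c2 * x / c1)^2)) = (2*(mx + kap * x))/aa x"
  proof -
    have "1 + (c2 * x / c1)^2 = aa x / c1^2" using c1 by (simp add: aa_def field_simps)
    hence "th * ((c2/c1) / (1 + (c2 * x / c1)^2)) = 2 * mx / aa x"
      using c1 c2 aa_pos[of x] by (simp add: th_def field_simps power2_eq_square)
    moreover have "(kap/c2^2) * ((2 * c2^2 * x) / aa x) = 2 * kap * x / aa x" using c2 by simp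
    ultimately show ?thesis by (simp add: add_divide_distrib algebra_simps)
  qed
  ultimately show ?thesis by simp
qed

definition gam :: real where "gam = exp (-(\<bar>th\<bar>*pi/2)) * (c1^2) powr (1/2 - kap/c2^2)"

lemma gam_pos: "gam > 0" using c1 by (simp add: gam_def)

lemma expBB_lower:
  assumes "mr \<le> 0" "x \<ge> 0"
  shows "exp (- BB x) \<ge> gam / (c1 + c2*x)"
proof -
  define k where "k = kap/c2^2"
  have k: "k \<le> 1/2" using assms(1) c2 by (simp add: k_def kap field_simps)
  have e1: "exp (- BB x) = aa x powr (-k) * exp (- (th * arctan (c2*x/c1)))"
    using aa_pos[of x] by (simp add: BB_def k_def powr_def exp_add[symmetric] exp_minus field_simps)
  have "\<bar>arctan (c2*x/c1)\<bar> \<le> pi/2" using arctan_bounded[of "c2*x/c1"] by (cases "arctan (c2*x/c1) \<ge> 0") auto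
  hence "\<bar>th\<bar> * \<bar>arctan (c2*x/c1)\<bar> \<le> \<bar>th\<bar> * (pi/2)" by (rule mult_left_mono) auto
  moreover have "th * arctan (c2*x/c1) \<le> \<bar>th\<bar> * \<bar>arctan (c2*x/c1)\<bar>"
    unfolding abs_mult[symmetric] by (rule abs_ge_self)
  ultimately have "th * arctan (c2*x/c1) \<le> \<bar>th\<bar>*pi/2" by simp
  hence e2: "exp (- (th * arctan (c2*x/c1))) \<ge> exp (-(\<bar>th\<bar>*pi/2))" by simp
  have e3: "aa x powr (-k) = aa x powr (-1/2) * aa x powr (1/2 - k)"
    by (simp add: powr_add[symmetric])
  have e4: "aa x powr (1/2 - k) \<ge> (c1^2) powr (1/2 - k)"
    using k by (intro powr_mono2) (auto simp: aa_def)
  have sq: "sqrt (aa x) \<le> c1 + c2*x"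
  proof -
    have "aa x \<le> (c1 + c2*x)^2" using c1 c2 assms(2) by (simp add: aa_def power2_eq_square algebra_simps)
    hence "sqrt (aa x) \<le> sqrt ((c1 + c2*x)^2)" by (rule real_sqrt_le_mono)
    thus ?thesis using c1 c2 assms(2) by simp
  qed
  have e5: "aa x powr (-1/2) \<ge> 1 / (c1 + c2*x)"
  proof -
    have h1: "aa x powr (-1/2) = inverse (aa x powr (1/2))" using powr_minus[of "aa x" "1/2"] by simp
    have h2: "aa x powr (1/2) = sqrt (aa x)" using aa_pos[of x] by (intro powr_half_sqrt) simp
    have "aa x powr (-1/2) = 1 / sqrt (aa x)" unfolding h1 h2 by (simp add: divide_inverse)
    moreover have "1 / sqrt (aa x) \<ge> 1/(c1+c2*x)"
      by (rule divide_left_mono[OF sq]) (use c1 c2 assms(2) aa_pos[of x] in \<open>auto intro!: mult_pos_pos add_pos_nonneg\<close>)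
    ultimately show ?thesis by simp
  qed
  have pos1: "1/(c1+c2*x) > 0" using c1 c2 assms(2) by (simp add: add_pos_nonneg)
  have "gam / (c1 + c2*x) = (1/(c1+c2*x)) * (c1^2) powr (1/2 - k) * exp (-(\<bar>th\<bar>*pi/2))"
    by (simp add: gam_def k_def)
  also have "\<dots> \<le> aa x powr (-1/2) * aa x powr (1/2 - k) * exp (- (th * arctan (c2*x/c1)))"
  proof -
    have "(1/(c1+c2*x)) * (c1^2) powr (1/2 - k) \<le> aa x powr (-1/2) * aa x powr (1/2 - k)"
      by (rule mult_mono[OF e5 e4]) auto
    thus ?thesis by (rule mult_mono[OF _ e2]) auto
  qed
  also have "\<dots> = exp (- BB x)" using e1 e3 by simp
  finally show ?thesis .
qed


lemma decay_contra:
  assumes mr: "mr \<le> 0"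
    and hd: "\<And>x. x \<ge> 0 \<Longrightarrow> (h has_real_derivative h' x) (at x within {0..})"
    and hpos: "\<And>x. x \<ge> 0 \<Longrightarrow> h x > 0" and eta: "eta > 0"
    and hb: "\<And>x. x > 0 \<Longrightarrow> - h' x \<ge> eta * exp (- BB x)"
  shows False
proof -
  define c where "c = eta * gam / c2"
  have cpos: "c > 0" using eta gam_pos c2 by (simp add: c_def)
  define Phi where "Phi x = h x + c * ln (c1 + c2 * x)" for x
  define b where "b = c1 * (exp (h 0 / c) - 1) / c2"
  have b0: "b \<ge> 0" using c1 c2 hpos[of 0] cpos by (simp add: b_def)
  have "Phi b \<le> Phi 0"
  proof (rule DERIV_nonpos_imp_decreasing_open[OF b0])
    have "continuous_on {0..b} h" using deriv_cont[OF hd] by (rule continuous_on_subset) auto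
    moreover have "continuous_on {0..b} (\<lambda>x. ln (c1 + c2 * x))"
    proof -
      have pos: "\<forall>x\<in>{0..b}. c1 + c2 * x > 0" using c1 c2 by (auto intro!: add_pos_nonneg)
      show ?thesis apply (intro continuous_intros) using pos by force

    qed
    ultimately show "continuous_on {0..b} Phi" unfolding Phi_def by (intro continuous_on_add continuous_on_mult_left)
    fix x assume x: "0 < x" "x < b"
    have d1: "(h has_real_derivative h' x) (at x)" using within_to_at[of x h] hd x by auto
    have pos: "c1 + c2 * x > 0" using c1 c2 x by (simp add: add_pos_pos)
    have d2: "((\<lambda>x. ln (c1 + c2 * x)) has_real_derivative c2 / (c1 + c2 * x)) (at x)"
      using pos by (auto intro!: derivative_eq_intros simp: divide_inverse)
    have "(Phi has_real_derivative h' x + c * (c2 / (c1 + c2 * x))) (at x)"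
      unfolding Phi_def by (intro DERIV_add DERIV_cmult d1 d2)
    moreover have "h' x + c * (c2 / (c1 + c2 * x)) \<le> 0"
    proof -
      have "eta * (gam / (c1 + c2 * x)) \<le> eta * exp (- BB x)"
        using expBB_lower[OF mr, of x] x eta by (intro mult_left_mono) auto
      moreover have "c * (c2 / (c1 + c2 * x)) = eta * (gam / (c1 + c2 * x))"
        using c2 by (simp add: c_def)
      ultimately show ?thesis using hb[OF x(1)] by linarith
    qed
    ultimately show "\<exists>y. (Phi has_real_derivative y) (at x) \<and> y \<le> 0" by blast
  qed
  moreover have "c1 + c2 * b = c1 * exp (h 0 / c)" using c2 by (simp add: b_def field_simps)
  hence "ln (c1 + c2 * b) = ln c1 + h 0 / c" using c1 by (simp add: ln_mult)
  hence "Phi b = h b + c * ln c1 + h 0" using cpos by (simp add: Phi_def algebra_simps)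
  moreover have "Phi 0 = h 0 + c * ln c1" by (simp add: Phi_def)
  ultimately have "h b \<le> 0" by simp
  with hpos[OF b0] show False by simp
qed

lemma uniq:
  assumes mr: "mr \<le> 0" and F: "ode_sol c1 c2 mx kap dl f f' f''" "prop_P f f'"
    and G: "ode_sol c1 c2 mx kap dl g g' g''" "prop_P g g'"
  shows "\<exists>K>0. \<forall>x\<ge>0. g x = K * f x"
proof -
  have fd: "\<And>x. x \<ge> 0 \<Longrightarrow> (f has_real_derivative f' x) (at x within {0..})"
    and fd2: "\<And>x. x \<ge> 0 \<Longrightarrow> (f' has_real_derivative f'' x) (at x within {0..})"
    and fe: "\<And>x. x \<ge> 0 \<Longrightarrow> aa x * f'' x + 2 * (mx + kap * x) * f' x - 2 * dl * f x = 0"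
    using F(1) by (auto simp: ode_sol_def aa_def)
  have gd: "\<And>x. x \<ge> 0 \<Longrightarrow> (g has_real_derivative g' x) (at x within {0..})"
    and gd2: "\<And>x. x \<ge> 0 \<Longrightarrow> (g' has_real_derivative g'' x) (at x within {0..})"
    and ge: "\<And>x. x \<ge> 0 \<Longrightarrow> aa x * g'' x + 2 * (mx + kap * x) * g' x - 2 * dl * g x = 0"
    using G(1) by (auto simp: ode_sol_def aa_def)
  have fpos: "\<And>x. x \<ge> 0 \<Longrightarrow> f x > 0" and f'n: "\<And>x. x > 0 \<Longrightarrow> f' x \<le> 0"
    using F(2) by (auto simp: prop_P_def)
  have gpos: "\<And>x. x \<ge> 0 \<Longrightarrow> g x > 0" and g'n: "\<And>x. x > 0 \<Longrightarrow> g' x \<le> 0"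
    using G(2) by (auto simp: prop_P_def)
  define W where "W x = f x * g' x - f' x * g x" for x
  define Q where "Q x = exp (BB x) * W x" for x
  have "\<exists>C. \<forall>x\<in>{0::real..}. Q x = C"
  proof (rule has_field_derivative_zero_constant)
    fix x :: real assume "x \<in> {0..}"
    hence x: "x \<ge> 0" by simp
    have dB: "(BB has_real_derivative (2*(mx + kap * x))/aa x) (at x within {0..})"
      using BB_deriv by (rule has_field_derivative_at_within)
    have e: "((\<lambda>x. exp (BB x)) has_real_derivative exp (BB x) * ((2*(mx + kap * x))/aa x)) (at x within {0..})"
      by (rule DERIV_chain2[OF DERIV_exp dB])
    have hw: "((\<lambda>x. f x * g' x - f' x * g x) has_real_derivative
        (f' x * g' x + g'' x * f x) - (f'' x * g x + g' x * f' x)) (at x within {0..})"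
      by (intro DERIV_diff DERIV_mult fd gd fd2 gd2 x)
    have "(Q has_real_derivative exp (BB x) * ((2*(mx + kap * x))/aa x) * W x +
       ((f' x * g' x + g'' x * f x) - (f'' x * g x + g' x * f' x)) * exp (BB x)) (at x within {0..})"
      unfolding Q_def W_def by (rule DERIV_mult[OF e hw])
    moreover have "exp (BB x) * ((2*(mx + kap * x))/aa x) * W x +
       ((f' x * g' x + g'' x * f x) - (f'' x * g x + g' x * f' x)) * exp (BB x) = 0"
    proof -
      have "aa x * (f x * g'' x - f'' x * g x) = - (2*(mx + kap * x)) * W x"
      proof -
        have "f x * (aa x * g'' x + 2 * (mx + kap * x) * g' x - 2 * dl * g x) -
              g x * (aa x * f'' x + 2 * (mx + kap * x) * f' x - 2 * dl * f x) = 0"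
          using fe[OF x] ge[OF x] by simp
        thus ?thesis unfolding W_def by (simp add: algebra_simps; linarith)
      qed
      hence "f x * g'' x - f'' x * g x = - ((2*(mx + kap * x))/aa x) * W x"
        using aa_pos[of x] by (simp add: field_simps)
      hence z: "(2*(mx + kap * x))/aa x * W x + (f x * g'' x - f'' x * g x) = 0" by simp
      have "exp (BB x) * ((2*(mx + kap * x))/aa x) * W x +
       ((f' x * g' x + g'' x * f x) - (f'' x * g x + g' x * f' x)) * exp (BB x) =
        exp (BB x) * ((2*(mx + kap * x))/aa x * W x + (f x * g'' x - f'' x * g x))"
        by (simp add: algebra_simps)
      thus ?thesis using z by simp
    qed
    ultimately show "(Q has_real_derivative 0) (at x within {0..})" by simp
  qed auto
  then obtain C where QC: "\<And>x. x \<ge> 0 \<Longrightarrow> Q x = C" by auto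
  have WC: "W x = C * exp (- BB x)" if "x \<ge> 0" for x
    using QC[OF that] by (simp add: Q_def exp_minus field_simps)
  consider "C = 0" | "C > 0" | "C < 0" by linarith
  thus ?thesis
  proof cases
    case 1
    define r where "r x = g x / f x" for x
    have "\<exists>K. \<forall>x\<in>{0::real..}. r x = K"
    proof (rule has_field_derivative_zero_constant)
      fix x :: real assume "x \<in> {0..}"
      hence x: "x \<ge> 0" by simp
      have "(r has_real_derivative (g' x * f x - g x * f' x) / (f x * f x)) (at x within {0..})"
        unfolding r_def using fpos[OF x] by (intro DERIV_divide fd gd x) auto
      moreover have "g' x * f x - g x * f' x = 0" using WC[OF x] 1 by (simp add: W_def algebra_simps)
      ultimately show "(r has_real_derivative 0) (at x within {0..})" by simp
    qed auto
    then obtain K where K: "\<And>x. x \<ge> 0 \<Longrightarrow> r x = K" by auto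
    have "K = g 0 / f 0" using K[of 0] by (simp add: r_def)
    hence "K > 0" using fpos[of 0] gpos[of 0] by simp
    moreover have "\<forall>x\<ge>0. g x = K * f x"
    proof (intro allI impI)
      fix x :: real assume x: "x \<ge> 0"
      have "g x / f x = K" using K[OF x] by (simp add: r_def)
      thus "g x = K * f x" using fpos[OF x] by (simp add: field_simps)
    qed
    ultimately show ?thesis by blast
  next
    case 2
    show ?thesis
    proof (rule FalseE, rule decay_contra[OF mr fd fpos, of "C / g 0"])
      show "C / g 0 > 0" using 2 gpos[of 0] by simp
      fix x :: real assume x: "x > 0"
      have gx: "g x \<le> g 0" using deriv_decr[OF gd g'n] x by simp
      have "f x * g' x \<le> 0" using fpos[of x] g'n[OF x] x by (simp add: mult_nonneg_nonpos)
      hence "- f' x * g x \<ge> C * exp (- BB x)" using WC[of x] x by (simp add: W_def)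
      moreover have "C * exp (- BB x) > 0" using 2 by simp
      ultimately have "- f' x \<ge> C * exp (- BB x) / g x" using gpos[of x] x by (simp add: field_simps)
      moreover have "C * exp (- BB x) / g x \<ge> C * exp (- BB x) / g 0"
        using gx gpos[of x] x 2 by (intro divide_left_mono) auto
      ultimately show "- f' x \<ge> C / g 0 * exp (- BB x)" by simp
    qed
  next
    case 3
    show ?thesis
    proof (rule FalseE, rule decay_contra[OF mr gd gpos, of "- C / f 0"])
      show "- C / f 0 > 0" using 3 fpos[of 0] by (simp add: divide_neg_pos)
      fix x :: real assume x: "x > 0"
      have fx: "f x \<le> f 0" using deriv_decr[OF fd f'n] x by simp
      have "f' x * g x \<le> 0" using gpos[of x] f'n[OF x] x by (simp add: mult_nonpos_nonneg)
      hence "- g' x * f x \<ge> - C * exp (- BB x)" using WC[of x] x by (simp add: W_def algebra_simps)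
      moreover have "- C * exp (- BB x) > 0" using 3 by (simp add: mult_neg_pos)
      ultimately have "- g' x \<ge> - C * exp (- BB x) / f x" using fpos[of x] x by (simp add: field_simps)
      moreover have "- C * exp (- BB x) / f x \<ge> - C * exp (- BB x) / f 0"
        using fx fpos[of x] x 3 by (intro divide_left_mono) (auto intro!: mult_nonpos_nonneg)
      ultimately show "- g' x \<ge> - C / f 0 * exp (- BB x)" by simp
    qed
  qed
qed

end



lemma powr_tail_integral:
  fixes r a b :: real
  assumes r: "r > 1" and a: "0 \<le> a" and ab: "a \<le> b"
  shows "((\<lambda>u. (1+u) powr (-r)) has_integral ((1+a) powr (1-r) - (1+b) powr (1-r))/(r-1)) {a..b}"
proof -
  define F where "F u = - ((1+u) powr (1-r)) / (r-1)" for u :: real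
  have "((\<lambda>u. (1+u) powr (-r)) has_integral (F b - F a)) {a..b}"
  proof (rule fundamental_theorem_of_calculus[OF ab])
    fix x assume x: "x \<in> {a..b}"
    hence xp: "1 + x > 0" using a by auto
    have d0: "((\<lambda>u. (1+u) powr (1-r)) has_real_derivative (1-r) * (1+x) powr (1-r - of_nat 1) * 1) (at x)"
      by (rule DERIV_fun_powr) (use xp in \<open>auto intro!: derivative_eq_intros\<close>)
    have "(F has_real_derivative - ((1-r) * (1+x) powr (1-r - of_nat 1) * 1) / (r-1)) (at x)"
      unfolding F_def by (rule DERIV_cdivide[OF DERIV_minus[OF d0]])
    moreover have "- ((1-r) * (1+x) powr (1-r - of_nat 1) * 1) / (r-1) = (1+x) powr (-r)"
      using r by (simp add: field_simps)
    ultimately have "(F has_real_derivative (1+x) powr (-r)) (at x)" by simp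
    thus "(F has_vector_derivative (1+x) powr (-r)) (at x within {a..b})"
      by (simp add: has_real_derivative_iff_has_vector_derivative[symmetric] has_field_derivative_at_within)
  qed
  moreover have "F b - F a = ((1+a) powr (1-r) - (1+b) powr (1-r))/(r-1)"
    by (simp add: F_def diff_divide_distrib)
  ultimately show ?thesis by simp
qed

lemma tail_unif:
  fixes k :: "real \<Rightarrow> real \<Rightarrow> real" and S :: "real set"
  assumes cont: "\<And>x. x \<in> S \<Longrightarrow> continuous_on {0..} (k x)"
    and bnd: "\<And>x u. x \<in> S \<Longrightarrow> u \<ge> 0 \<Longrightarrow> \<bar>k x u\<bar> \<le> C * (1+u) powr (-r)"
    and r: "r > 1"
  shows "\<exists>L. uniform_limit S (\<lambda>n x. integral {0..real n} (k x)) L sequentially"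
proof -
  define I where "I n x = integral {0..real n} (k x)" for n x
  define B where "B n = C / (r-1) * (1 + real n) powr (1-r)" for n
  have intg: "k x integrable_on {a..b}" if "x \<in> S" "0 \<le> a" for x a b
    using cont[OF that(1)] that(2) by (intro integrable_continuous_interval) (auto elim: continuous_on_subset)
  have diff: "\<bar>I m x - I n x\<bar> \<le> B n" if "x \<in> S" "n \<le> m" for x m n
  proof -
    have nm: "real n \<le> real m" using that by simp
    have "I m x = I n x + integral {real n..real m} (k x)"
      unfolding I_def using Henstock_Kurzweil_Integration.integral_combine[where a=0 and c="real n" and b="real m" and f="k x"] intg[OF that(1)] nm by simp
    hence e: "I m x - I n x = integral {real n..real m} (k x)" by simp
    have gi: "((\<lambda>u. C * (1+u) powr (-r)) has_integral C * (((1+real n) powr (1-r) - (1+real m) powr (1-r))/(r-1))) {real n..real m}"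
      using powr_tail_integral[OF r _ nm] by (intro has_integral_mult_right) auto
    have k1: "integral {real n..real m} (k x) \<le> C * (((1+real n) powr (1-r) - (1+real m) powr (1-r))/(r-1))"
      using bnd[OF that(1)] by (intro has_integral_le[OF integrable_integral[OF intg[OF that(1)]] gi]) (auto simp: abs_le_iff)
    have k2: "- integral {real n..real m} (k x) \<le> C * (((1+real n) powr (1-r) - (1+real m) powr (1-r))/(r-1))"
    proof -
      have "((\<lambda>u. - k x u) has_integral - integral {real n..real m} (k x)) {real n..real m}"
        by (intro has_integral_neg integrable_integral intg[OF that(1)]) simp
      thus ?thesis using bnd[OF that(1)] by (intro has_integral_le[OF _ gi]) (auto simp: abs_le_iff)
    qed
    have "C * (((1+real n) powr (1-r) - (1+real m) powr (1-r))/(r-1)) \<le> B n"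
    proof -
      have "\<bar>k x 0\<bar> \<le> C" using bnd[OF that(1), of 0] by simp
      hence C0: "C \<ge> 0" using abs_ge_zero[of "k x 0"] by linarith
      have "(1+real n) powr (1-r) - (1+real m) powr (1-r) \<le> (1+real n) powr (1-r)" by simp
      hence "((1+real n) powr (1-r) - (1+real m) powr (1-r)) / (r-1) \<le> (1+real n) powr (1-r) / (r-1)"
        by (rule divide_right_mono) (use r in simp)
      hence "C * (((1+real n) powr (1-r) - (1+real m) powr (1-r)) / (r-1)) \<le> C * ((1+real n) powr (1-r) / (r-1))"
        by (rule mult_left_mono) (rule C0)
      thus ?thesis unfolding B_def by simp
    qed
    with k1 k2 e show ?thesis by linarith
  qed
  have B0: "B \<longlonglongrightarrow> 0"
  proof -
    have "filterlim (\<lambda>n. 1 + real n) at_top sequentially"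
      by (intro filterlim_tendsto_add_at_top[OF tendsto_const] filterlim_real_sequentially)
    hence "(\<lambda>n. (1 + real n) powr (1-r)) \<longlonglongrightarrow> 0" using r by (intro tendsto_neg_powr) auto
    thus ?thesis unfolding B_def by (intro tendsto_mult_right_zero)
  qed
  have conv: "convergent (\<lambda>n. I n x)" if "x \<in> S" for x
  proof (rule real_Cauchy_convergent, rule metric_CauchyI)
    fix e :: real assume e: "e > 0"
    from B0 e obtain N where N: "\<And>n. n \<ge> N \<Longrightarrow> \<bar>B n\<bar> < e" by (auto simp: lim_sequentially dist_real_def)
    show "\<exists>M. \<forall>m\<ge>M. \<forall>n\<ge>M. dist (I m x) (I n x) < e"
    proof (intro exI allI impI)
      fix m n assume mn: "m \<ge> N" "n \<ge> N"
      have "\<bar>I m x - I n x\<bar> < e"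
      proof (cases "n \<le> m")
        case True
        thus ?thesis using diff[OF that True] N[OF mn(2)] abs_ge_self[of "B n"] by linarith
      next
        case False
        hence "m \<le> n" by simp
        hence "\<bar>I n x - I m x\<bar> \<le> B m" by (rule diff[OF that])
        moreover have "\<bar>I m x - I n x\<bar> = \<bar>I n x - I m x\<bar>" by (rule abs_minus_commute)
        ultimately show ?thesis using N[OF mn(1)] abs_ge_self[of "B m"] by linarith
      qed
      thus "dist (I m x) (I n x) < e" by (simp add: dist_real_def)
    qed
  qed
  define L where "L x = lim (\<lambda>n. I n x)" for x
  have LL: "(\<lambda>n. I n x) \<longlonglongrightarrow> L x" if "x \<in> S" for x
    using conv[OF that] by (simp add: L_def convergent_LIMSEQ_iff)
  have LB: "\<bar>L x - I n x\<bar> \<le> B n" if "x \<in> S" for x n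
  proof -
    have "(\<lambda>m. \<bar>I m x - I n x\<bar>) \<longlonglongrightarrow> \<bar>L x - I n x\<bar>"
      by (intro tendsto_intros LL[OF that])
    thus ?thesis by (rule LIMSEQ_le_const2) (use diff[OF that] in auto)
  qed
  have "uniform_limit S I L sequentially"
  proof (rule uniform_limitI)
    fix e :: real assume e: "e > 0"
    from B0 e obtain N where N: "\<And>n. n \<ge> N \<Longrightarrow> \<bar>B n\<bar> < e" by (auto simp: lim_sequentially dist_real_def)
    show "\<forall>\<^sub>F n in sequentially. \<forall>x\<in>S. dist (I n x) (L x) < e"
      unfolding eventually_sequentially
    proof (intro exI allI impI ballI)
      fix n x assume n: "n \<ge> N" and x: "x \<in> S"
      have "\<bar>I n x - L x\<bar> = \<bar>L x - I n x\<bar>" by (rule abs_minus_commute)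
      thus "dist (I n x) (L x) < e" using LB[OF x, of n] N[OF n] abs_ge_self[of "B n"]
        by (simp add: dist_real_def)
    qed
  qed
  thus ?thesis unfolding I_def by blast
qed

lemma deriv_seq:
  fixes f f' :: "nat \<Rightarrow> real \<Rightarrow> real"
  assumes S: "convex S" and d: "\<And>n x. x \<in> S \<Longrightarrow> (f n has_real_derivative f' n x) (at x within S)"
    and u: "uniform_limit S f' g' sequentially" and x0: "x0 \<in> S" and c: "convergent (\<lambda>n. f n x0)"
  shows "\<exists>g. \<forall>x\<in>S. (\<lambda>n. f n x) \<longlonglongrightarrow> g x \<and> (g has_real_derivative g' x) (at x within S)"
proof -
  from c obtain l where l: "(\<lambda>n. f n x0) \<longlonglongrightarrow> l" by (auto simp: convergent_def)
  have dd: "\<And>n x. x \<in> S \<Longrightarrow> (f n has_derivative (\<lambda>h. f' n x * h)) (at x within S)"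
    using d by (simp add: has_field_derivative_def)
  have nle: "\<forall>\<^sub>F n in sequentially. \<forall>x\<in>S. \<forall>h. norm (f' n x * h - g' x * h) \<le> e * norm h"
    if e: "e > 0" for e :: real
  proof -
    have "\<forall>\<^sub>F n in sequentially. \<forall>x\<in>S. dist (f' n x) (g' x) < e" by (rule uniform_limitD[OF u e])
    thus ?thesis
    proof eventually_elim
      case (elim n)
      show ?case
      proof (intro ballI allI)
        fix x h assume "x \<in> S"
        hence "\<bar>f' n x - g' x\<bar> \<le> e" using elim by (auto simp: dist_real_def)
        hence "\<bar>f' n x - g' x\<bar> * \<bar>h\<bar> \<le> e * \<bar>h\<bar>" by (rule mult_right_mono) simp
        moreover have "f' n x * h - g' x * h = (f' n x - g' x) * h" by (simp add: algebra_simps)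
        ultimately show "norm (f' n x * h - g' x * h) \<le> e * norm h" by (simp add: abs_mult)
      qed
    qed
  qed
  have "\<exists>g. \<forall>x\<in>S. (\<lambda>n. f n x) \<longlonglongrightarrow> g x \<and> (g has_derivative (\<lambda>h. g' x * h)) (at x within S)"
    by (rule has_derivative_sequence[OF S dd nle x0 l])
  thus ?thesis unfolding has_field_derivative_def by blast
qed




context prm begin

definition sD :: real where "sD = sqrt (mr^2 + 2 * dl * c2^2)"
definition lam :: real where "lam = (sD - mr) / c2^2"
definition pp :: real where "pp = lam + kap / c2^2"
definition rr :: real where "rr = 2 * pp - lam"
definition PP :: "real \<Rightarrow> real" where "PP s = 2 * pp * c2^2 * s + 2 * mx"
definition RR :: "real \<Rightarrow> real" where "RR s = - 2 * pp * c2^2 * aa s + (PP s)^2 + 2 * c2^2 * s * PP s"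
definition EE :: "real \<Rightarrow> real" where "EE s = - pp * ln (aa s) - th * arctan (c2 * s / c1)"
definition w :: "real \<Rightarrow> real" where "w s = exp (EE s)"
definition w1 :: "real \<Rightarrow> real" where "w1 s = - PP s * w s / aa s"
definition w2 :: "real \<Rightarrow> real" where "w2 s = RR s * w s / (aa s)^2"

lemma sD_gt: "sD > \<bar>mr\<bar>"
proof -
  have "sqrt (mr^2) < sqrt (mr^2 + 2 * dl * c2^2)" using dl c2 by (intro real_sqrt_less_mono) simp
  thus ?thesis by (simp add: sD_def)
qed

lemma sD_sq: "sD^2 = mr^2 + 2 * dl * c2^2"
  unfolding sD_def using dl by (intro real_sqrt_pow2) simp

lemma lam_pos: "lam > 0"
  using sD_gt c2 by (simp add: lam_def)

lemma lam_eq: "c2^2 * lam^2 + 2 * mr * lam - 2 * dl = 0"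
proof -
  have c: "c2^2 * lam = sD - mr" using c2 by (simp add: lam_def)
  have "c2^2 * (c2^2 * lam^2 + 2 * mr * lam - 2 * dl) = (c2^2 * lam)^2 + 2 * mr * (c2^2 * lam) - 2 * dl * c2^2"
    by (simp add: algebra_simps power2_eq_square)
  also have "\<dots> = 0" unfolding c using sD_sq by (simp add: algebra_simps power2_eq_square)
  finally show ?thesis using c2 by simp
qed

lemma rr_eq: "rr = (sD + mr) / c2^2 + 1"
  unfolding rr_def pp_def lam_def unfolding kap using c2 by (simp add: field_simps)

lemma rr_gt: "rr > 1"
proof -
  have "(sD + mr) / c2^2 > 0" using sD_gt c2 by (intro divide_pos_pos) auto
  thus ?thesis by (simp add: rr_eq)
qed

lemma pp_pos: "pp > 0"
  using rr_gt lam_pos by (simp add: rr_def)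

lemma th_term: "th * ((c2/c1) / (1 + (c2 * x / c1)^2)) = 2 * mx / aa x"
proof -
  have "1 + (c2 * x / c1)^2 = aa x / c1^2" using c1 by (simp add: aa_def field_simps)
  thus ?thesis using c1 c2 aa_pos[of x] by (simp add: th_def field_simps power2_eq_square)
qed

lemma EE_deriv: "(EE has_real_derivative - PP s / aa s) (at s)"
proof -
  have "(EE has_real_derivative - pp * ((2 * c2^2 * s) / aa s) - th * ((c2/c1) / (1 + (c2 * s / c1)^2))) (at s)"
    unfolding EE_def by (intro DERIV_diff DERIV_cmult ln_aa_deriv arctan_deriv)
  moreover have "- pp * ((2 * c2^2 * s) / aa s) - th * ((c2/c1) / (1 + (c2 * s / c1)^2)) = - PP s / aa s"
    unfolding th_term PP_def using aa_pos[of s] by (simp add: field_simps)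
  ultimately show ?thesis by simp
qed

lemma w_pos: "w s > 0" by (simp add: w_def)

lemma w_deriv: "(w has_real_derivative w1 s) (at s)"
proof -
  have "(w has_real_derivative exp (EE s) * (- PP s / aa s)) (at s)"
    unfolding w_def by (rule DERIV_chain2[OF DERIV_exp EE_deriv])
  thus ?thesis by (simp add: w1_def w_def mult.commute)
qed

lemma PP_deriv: "((\<lambda>s. - PP s) has_real_derivative - (2 * pp * c2^2)) (at s)"
  unfolding PP_def by (auto intro!: derivative_eq_intros)

lemma w1_deriv: "(w1 has_real_derivative w2 s) (at s)"
proof -
  have "((\<lambda>s. - PP s * w s / aa s) has_real_derivative
     (((- (2 * pp * c2^2)) * w s + w1 s * (- PP s)) * aa s - (- PP s * w s) * (2 * c2^2 * s)) / (aa s * aa s)) (at s)"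
    using aa_pos[of s] by (intro DERIV_divide DERIV_mult PP_deriv w_deriv aa_deriv) auto
  moreover have "(((- (2 * pp * c2^2)) * w s + w1 s * (- PP s)) * aa s - (- PP s * w s) * (2 * c2^2 * s)) / (aa s * aa s) = w2 s"
    using aa_pos[of s] by (simp add: w1_def w2_def RR_def field_simps power2_eq_square)
  ultimately show ?thesis by (simp add: w1_def[abs_def])
qed

lemma w_cont: "continuous_on UNIV w"
  using w_deriv by (intro has_real_derivative_imp_continuous_on) auto
lemma w1_cont: "continuous_on UNIV w1"
  using w1_deriv by (intro has_real_derivative_imp_continuous_on) auto
lemma aa_cont: "continuous_on UNIV aa"
  unfolding aa_def[abs_def] by (intro continuous_intros)
lemma RR_cont: "continuous_on UNIV RR"
  unfolding RR_def[abs_def] PP_def by (intro continuous_intros aa_cont)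
lemma w2_cont: "continuous_on UNIV w2"
proof -
  have "continuous_on UNIV (\<lambda>s. RR s * w s / (aa s)^2)"
    by (rule continuous_on_divide[OF continuous_on_mult[OF RR_cont w_cont] continuous_on_power[OF aa_cont]])
       (use aa_pos in \<open>simp add: less_imp_neq[symmetric]\<close>)
  thus ?thesis by (simp add: w2_def[abs_def])
qed

end



context prm begin

definition m0 :: real where "m0 = min (c1^2) (c2^2) / 2"
definition K1 :: real where "K1 = (2 * pp * c2^2 + 2 * \<bar>mx\<bar>) / m0"
definition K2 :: real where "K2 = 2 * pp * c2^2 / c1^2 + K1^2 + 2 * c2^2 * K1 / m0"
definition Cw :: real where "Cw = exp (\<bar>th\<bar> * pi / 2) * m0 powr (- pp)"
definition Cb :: real where "Cb = Cw * (1 + K1 + K2)"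

lemma m0_pos: "m0 > 0" using c1 c2 by (simp add: m0_def)
lemma K1_pos: "K1 \<ge> 0" using pp_pos m0_pos by (simp add: K1_def)
lemma K2_pos: "K2 \<ge> 0" using pp_pos m0_pos K1_pos c1 by (simp add: K2_def)
lemma Cw_pos: "Cw > 0" using m0_pos by (simp add: Cw_def)
lemma Cb_pos: "Cb > 0" using Cw_pos K1_pos K2_pos by (simp add: Cb_def add_pos_nonneg)

lemma aa_lower:
  assumes "s \<ge> 0" shows "m0 * (1+s)^2 \<le> aa s"
proof -
  define mm where "mm = min (c1^2) (c2^2)"
  have mm1: "mm \<le> c1^2" and mm2: "mm \<le> c2^2" and mm0: "mm > 0" using c1 c2 by (auto simp: mm_def)
  have "(1+s)^2 \<le> 2 * (1 + s^2)"
  proof -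
    have "2 * (1 + s^2) - (1+s)^2 = (1-s)^2" by (simp add: power2_eq_square algebra_simps)
    moreover have "(1-s)^2 \<ge> 0" by simp
    ultimately show ?thesis by linarith
  qed
  hence "m0 * (1+s)^2 \<le> mm * (1 + s^2)"
    using mm0 by (simp add: m0_def mm_def[symmetric])
  also have "\<dots> = mm + mm * s^2" by (simp add: algebra_simps)
  also have "\<dots> \<le> c1^2 + c2^2 * s^2" using mm1 mm2 by (intro add_mono mult_right_mono) auto
  finally show ?thesis by (simp add: aa_def)
qed

lemma w_expr: "w s = aa s powr (- pp) * exp (- (th * arctan (c2 * s / c1)))"
proof -
  have "EE s = (- pp) * ln (aa s) + (- (th * arctan (c2 * s / c1)))" by (simp add: EE_def)
  hence "w s = exp ((- pp) * ln (aa s)) * exp (- (th * arctan (c2 * s / c1)))"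
    by (simp add: w_def exp_add[symmetric])
  thus ?thesis using aa_pos[of s] by (simp add: powr_def)
qed

lemma w_bound0:
  assumes s: "s \<ge> 0" shows "w s \<le> Cw * (1+s) powr (- 2 * pp)"
proof -
  have "\<bar>arctan (c2 * s / c1)\<bar> \<le> pi/2" using arctan_bounded[of "c2 * s / c1"]
    by (cases "arctan (c2 * s / c1) \<ge> 0") auto
  hence "\<bar>th\<bar> * \<bar>arctan (c2 * s / c1)\<bar> \<le> \<bar>th\<bar> * (pi/2)" by (rule mult_left_mono) auto
  moreover have "- (th * arctan (c2 * s / c1)) \<le> \<bar>th\<bar> * \<bar>arctan (c2 * s / c1)\<bar>"
    unfolding abs_mult[symmetric] by (rule abs_ge_minus_self)
  ultimately have "- (th * arctan (c2 * s / c1)) \<le> \<bar>th\<bar> * pi / 2" by simp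
  hence e2: "exp (- (th * arctan (c2 * s / c1))) \<le> exp (\<bar>th\<bar> * pi / 2)" by simp
  have pos: "0 < m0 * (1+s)^2" using m0_pos s by simp
  have "aa s powr (- pp) \<le> (m0 * (1+s)^2) powr (- pp)"
    by (rule powr_mono2'[OF _ pos aa_lower[OF s]]) (use pp_pos in simp)
  also have "\<dots> = m0 powr (- pp) * ((1+s)^2) powr (- pp)"
    using m0_pos s by (simp add: powr_mult)
  also have "((1+s)^2) powr (- pp) = (1+s) powr (- 2 * pp)"
  proof -
    have h: "(1+s)^2 = (1+s) powr 2" using s by simp
    have "((1+s)^2) powr (- pp) = ((1+s) powr 2) powr (- pp)" by (simp only: h)
    also have "\<dots> = (1+s) powr (2 * (- pp))" by (rule powr_powr)
    finally show ?thesis by simp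
  qed
  finally have e1: "aa s powr (- pp) \<le> m0 powr (- pp) * (1+s) powr (- 2 * pp)" .
  have "w s \<le> (m0 powr (- pp) * (1+s) powr (- 2 * pp)) * exp (\<bar>th\<bar> * pi / 2)"
    unfolding w_expr by (rule mult_mono[OF e1 e2]) auto
  thus ?thesis by (simp add: Cw_def mult_ac)
qed

lemma PP_bound:
  assumes s: "s \<ge> 0" shows "\<bar>PP s\<bar> \<le> K1 * aa s"
proof -
  have "\<bar>PP s\<bar> \<le> \<bar>2 * pp * c2^2 * s\<bar> + \<bar>2 * mx\<bar>"
    unfolding PP_def by (rule abs_triangle_ineq)
  also have "\<dots> = 2 * pp * c2^2 * s + 2 * \<bar>mx\<bar>" using pp_pos s by (simp add: abs_mult)
  also have "\<dots> \<le> (2 * pp * c2^2 + 2 * \<bar>mx\<bar>) * (1+s)^2"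
  proof -
    have "s \<le> (1+s)^2" "1 \<le> (1+s)^2" using s by (simp_all add: power2_eq_square algebra_simps)
    have "2 * pp * c2^2 * s \<le> 2 * pp * c2^2 * (1+s)^2"
      using pp_pos \<open>s \<le> (1+s)^2\<close> by (intro mult_left_mono) auto
    moreover have "2 * \<bar>mx\<bar> * 1 \<le> 2 * \<bar>mx\<bar> * (1+s)^2"
      using \<open>1 \<le> (1+s)^2\<close> by (intro mult_left_mono) auto
    ultimately show ?thesis by (simp add: algebra_simps)
  qed
  also have "\<dots> = K1 * (m0 * (1+s)^2)" using m0_pos by (simp add: K1_def)
  also have "\<dots> \<le> K1 * aa s" by (rule mult_left_mono[OF aa_lower[OF s] K1_pos])
  finally show ?thesis .
qed

lemma RR_bound:
  assumes s: "s \<ge> 0" shows "\<bar>RR s\<bar> \<le> K2 * (aa s)^2"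
proof -
  have a1: "aa s \<ge> c1^2" by (simp add: aa_def)
  have ap: "aa s > 0" by (rule aa_pos)
  have sa: "s \<le> aa s / m0"
  proof -
    have "s \<le> (1+s)^2" using s by (simp add: power2_eq_square algebra_simps)
    hence "m0 * s \<le> m0 * (1+s)^2" using m0_pos by simp
    also have "\<dots> \<le> aa s" by (rule aa_lower[OF s])
    finally show ?thesis using m0_pos by (simp add: field_simps)
  qed
  have pb: "\<bar>PP s\<bar> \<le> K1 * aa s" by (rule PP_bound[OF s])
  have t1: "2 * pp * c2^2 * aa s \<le> (2 * pp * c2^2 / c1^2) * (aa s)^2"
  proof -
    have "2 * pp * c2^2 * aa s * c1^2 \<le> 2 * pp * c2^2 * aa s * aa s"
      using a1 pp_pos ap by (intro mult_left_mono) auto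
    thus ?thesis using c1 by (simp add: field_simps power2_eq_square)
  qed
  have t2: "(PP s)^2 \<le> K1^2 * (aa s)^2"
  proof -
    have "\<bar>PP s\<bar>^2 \<le> (K1 * aa s)^2" by (rule power_mono[OF pb]) simp
    thus ?thesis by (simp add: power_mult_distrib)
  qed
  have t3: "\<bar>2 * c2^2 * s * PP s\<bar> \<le> (2 * c2^2 * K1 / m0) * (aa s)^2"
  proof -
    have "\<bar>2 * c2^2 * s * PP s\<bar> = 2 * c2^2 * s * \<bar>PP s\<bar>" using s by (simp add: abs_mult)
    also have "\<dots> \<le> 2 * c2^2 * (aa s / m0) * (K1 * aa s)"
      using sa pb s m0_pos aa_pos[of s] by (intro mult_mono mult_left_mono) auto
    also have "\<dots> = (2 * c2^2 * K1 / m0) * (aa s)^2" by (simp add: power2_eq_square)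
    finally show ?thesis .
  qed
  have "\<bar>RR s\<bar> \<le> \<bar>- 2 * pp * c2^2 * aa s + (PP s)^2\<bar> + \<bar>2 * c2^2 * s * PP s\<bar>"
    unfolding RR_def by (rule abs_triangle_ineq)
  moreover have "\<bar>- 2 * pp * c2^2 * aa s + (PP s)^2\<bar> \<le> \<bar>- 2 * pp * c2^2 * aa s\<bar> + \<bar>(PP s)^2\<bar>"
    by (rule abs_triangle_ineq)
  moreover have "\<bar>- 2 * pp * c2^2 * aa s\<bar> = 2 * pp * c2^2 * aa s" using pp_pos ap by (simp add: abs_mult)
  ultimately have "\<bar>RR s\<bar> \<le> 2 * pp * c2^2 * aa s + (PP s)^2 + \<bar>2 * c2^2 * s * PP s\<bar>" by simp
  also have "\<dots> \<le> K2 * (aa s)^2" using t1 t2 t3 by (simp add: K2_def algebra_simps)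
  finally show ?thesis .
qed

lemma w1_abs: assumes s: "s \<ge> 0" shows "\<bar>w1 s\<bar> \<le> K1 * w s"
proof -
  have "\<bar>w1 s\<bar> = \<bar>PP s\<bar> * \<bar>w s\<bar> / \<bar>aa s\<bar>" unfolding w1_def by (simp only: abs_divide abs_mult abs_minus_cancel)
  also have "\<dots> = \<bar>PP s\<bar> * w s / aa s" using w_pos[of s] aa_pos[of s] by (simp only: abs_of_pos)
  also have "\<dots> \<le> K1 * aa s * w s / aa s"
    using PP_bound[OF s] w_pos[of s] aa_pos[of s] by (intro divide_right_mono mult_right_mono) auto
  also have "\<dots> = K1 * w s" using aa_pos[of s] by simp
  finally show ?thesis .
qed

lemma w2_abs: assumes s: "s \<ge> 0" shows "\<bar>w2 s\<bar> \<le> K2 * w s"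
proof -
  have "\<bar>w2 s\<bar> = \<bar>RR s\<bar> * \<bar>w s\<bar> / \<bar>(aa s)^2\<bar>" unfolding w2_def by (simp only: abs_divide abs_mult)
  also have "\<dots> = \<bar>RR s\<bar> * w s / (aa s)^2" using w_pos[of s] aa_pos[of s] by (simp only: abs_of_pos zero_less_power)
  also have "\<dots> \<le> K2 * (aa s)^2 * w s / (aa s)^2"
    using RR_bound[OF s] w_pos[of s] aa_pos[of s] by (intro divide_right_mono mult_right_mono) auto
  also have "\<dots> = K2 * w s" using aa_pos[of s] by simp
  finally show ?thesis .
qed

lemma wi_bound:
  assumes s: "s \<ge> 0"
  shows "\<bar>w s\<bar> \<le> Cb * (1+s) powr (- 2 * pp)" "\<bar>w1 s\<bar> \<le> Cb * (1+s) powr (- 2 * pp)"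
    "\<bar>w2 s\<bar> \<le> Cb * (1+s) powr (- 2 * pp)"
proof -
  define q where "q = Cw * (1+s) powr (- 2 * pp)"
  have wb: "w s \<le> q" unfolding q_def by (rule w_bound0[OF s])
  have q0: "0 \<le> q" using Cw_pos by (simp add: q_def)
  have cb: "Cb * (1+s) powr (- 2 * pp) = q + K1 * q + K2 * q" by (simp add: Cb_def q_def algebra_simps)
  have a1: "K1 * w s \<le> K1 * q" by (rule mult_left_mono[OF wb K1_pos])
  have a2: "K2 * w s \<le> K2 * q" by (rule mult_left_mono[OF wb K2_pos])
  have b1: "0 \<le> K1 * q" "0 \<le> K2 * q" using K1_pos K2_pos q0 by simp_all
  show "\<bar>w s\<bar> \<le> Cb * (1+s) powr (- 2 * pp)" unfolding cb using wb w_pos[of s] b1 by simp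
  show "\<bar>w1 s\<bar> \<le> Cb * (1+s) powr (- 2 * pp)" unfolding cb using w1_abs[OF s] a1 b1 q0 by linarith
  show "\<bar>w2 s\<bar> \<le> Cb * (1+s) powr (- 2 * pp)" unfolding cb using w2_abs[OF s] a2 b1 q0 by linarith
qed

lemma ker_bound:
  assumes f: "\<And>s. s \<ge> 0 \<Longrightarrow> \<bar>f s\<bar> \<le> Cb * (1+s) powr (- 2 * pp)"
    and x: "x \<ge> 0" and u: "u \<ge> 0"
  shows "\<bar>f (x+u) * u powr lam\<bar> \<le> Cb * (1+u) powr (- rr)"
proof -
  have "\<bar>f (x+u)\<bar> \<le> Cb * (1+(x+u)) powr (- 2 * pp)" using f x u by simp
  also have "\<dots> \<le> Cb * (1+u) powr (- 2 * pp)"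
    using pp_pos u x Cb_pos by (intro mult_left_mono powr_mono2') auto
  finally have a: "\<bar>f (x+u)\<bar> \<le> Cb * (1+u) powr (- 2 * pp)" .
  have b: "u powr lam \<le> (1+u) powr lam" using lam_pos u by (intro powr_mono2) auto
  have "\<bar>f (x+u) * u powr lam\<bar> = \<bar>f (x+u)\<bar> * u powr lam" by (simp add: abs_mult)
  also have "\<dots> \<le> (Cb * (1+u) powr (- 2 * pp)) * (1+u) powr lam"
    using a b Cb_pos by (intro mult_mono) auto
  also have "\<dots> = Cb * (1+u) powr (- rr)"
    using u by (simp add: rr_def powr_add[symmetric] mult.assoc)
  finally show ?thesis .
qed

end



lemma key_poly:
  fixes c1 c2 mx mr lam x u :: real
  shows "(c1^2 + c2^2 * (x+u)^2) * (lam * (lam * (2 * c2^2 * (x+u) - c2^2 * u) + 2 * (mx + (mr + c2^2/2) * x))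
            + u * (c2^2 * lam) + (c2^2 * lam^2 + 2 * mr * lam) * u)
         - (2 * (lam * c2^2 + mr + c2^2/2) * (x+u) + 2 * mx) * (lam * (c1^2 + c2^2 * x^2) + u * lam * (2 * c2^2 * (x+u) - c2^2 * u)) = 0"
  by (simp add: algebra_simps power2_eq_square)

context prm begin

lemma key_id:
  "lam * (lam * w (x+u) * (2 * c2^2 * (x+u) - c2^2 * u) + aa x * w1 (x+u) + 2 * (mx + kap * x) * w (x+u))
   + u * (lam * w1 (x+u) * (2 * c2^2 * (x+u) - c2^2 * u) + c2^2 * lam * w (x+u)) + 2 * dl * u * w (x+u) = 0"
proof -
  define s where "s = x + u"
  define W where "W = w s"
  define W1 where "W1 = w1 s"
  define q where "q = 2 * c2^2 * s - c2^2 * u"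
  have dl2: "2 * dl * u * W = (c2^2 * lam^2 + 2 * mr * lam) * u * W" using lam_eq by simp
  have pc: "pp * c2^2 = lam * c2^2 + mr + c2^2/2" unfolding pp_def unfolding kap using c2 by (simp add: field_simps)
  have PPs: "PP s = 2 * (lam * c2^2 + mr + c2^2/2) * s + 2 * mx"
    unfolding PP_def using pc by (simp add: algebra_simps)
  have as: "aa s > 0" by (rule aa_pos)
  have hW1: "aa s * W1 = - PP s * W" using as by (simp add: W1_def W_def w1_def)
  have "aa s * (lam * (lam * W * q + aa x * W1 + 2 * (mx + kap * x) * W) + u * (lam * W1 * q + c2^2 * lam * W) + 2 * dl * u * W)
     = aa s * (lam * (lam * W * q + 2 * (mx + kap * x) * W) + u * (c2^2 * lam * W) + 2 * dl * u * W)
       + (aa s * W1) * (lam * aa x + u * lam * q)"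
    by (simp add: algebra_simps)
  also have "\<dots> = aa s * (lam * (lam * W * q + 2 * (mx + kap * x) * W) + u * (c2^2 * lam * W) + 2 * dl * u * W)
       - PP s * W * (lam * aa x + u * lam * q)" unfolding hW1 by simp
  also have "\<dots> = W * ((c1^2 + c2^2 * (x+u)^2) * (lam * (lam * (2 * c2^2 * (x+u) - c2^2 * u) + 2 * (mx + (mr + c2^2/2) * x))
            + u * (c2^2 * lam) + (c2^2 * lam^2 + 2 * mr * lam) * u)
         - (2 * (lam * c2^2 + mr + c2^2/2) * (x+u) + 2 * mx) * (lam * (c1^2 + c2^2 * x^2) + u * lam * (2 * c2^2 * (x+u) - c2^2 * u)))"
    unfolding PPs unfolding dl2 unfolding aa_def unfolding q_def unfolding s_def unfolding kap
    by (simp add: algebra_simps power2_eq_square)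
  also have "\<dots> = 0" using key_poly[of c1 c2 x u lam mx mr] by simp
  finally have "aa s * (lam * (lam * W * q + aa x * W1 + 2 * (mx + kap * x) * W) + u * (lam * W1 * q + c2^2 * lam * W) + 2 * dl * u * W) = 0" .
  hence "lam * (lam * W * q + aa x * W1 + 2 * (mx + kap * x) * W) + u * (lam * W1 * q + c2^2 * lam * W) + 2 * dl * u * W = 0"
    using as by simp
  thus ?thesis by (simp add: W_def W1_def s_def q_def)
qed


definition k0 :: "real \<Rightarrow> real \<Rightarrow> real" where "k0 x u = w (x+u) * u powr lam"
definition k1 :: "real \<Rightarrow> real \<Rightarrow> real" where "k1 x u = w1 (x+u) * u powr lam"
definition k2 :: "real \<Rightarrow> real \<Rightarrow> real" where "k2 x u = w2 (x+u) * u powr lam"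

lemma powr_lam_cont: "continuous_on {0..} (\<lambda>u::real. u powr lam)"
  by (rule continuous_on_powr') (use lam_pos in \<open>auto intro: continuous_intros\<close>)

lemma kcont_gen:
  assumes "continuous_on UNIV f"
  shows "continuous_on {0..} (\<lambda>u. f (x+u) * u powr lam)"
proof -
  have "continuous_on {0..} (\<lambda>u. f (x+u))"
    by (rule continuous_on_compose2[OF assms]) (auto intro!: continuous_intros)
  thus ?thesis by (intro continuous_on_mult powr_lam_cont)
qed

lemma kcont2_gen:
  assumes "continuous_on UNIV f"
  shows "continuous_on ({0..} \<times> cbox 0 b) (\<lambda>(x, t). f (x+t) * t powr lam)"
proof -
  have "continuous_on ({0..} \<times> cbox 0 b) (\<lambda>z. f (fst z + snd z))"
    by (rule continuous_on_compose2[OF assms]) (auto intro!: continuous_intros)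
  moreover have "continuous_on ({0..} \<times> cbox (0::real) b) (\<lambda>z. snd z powr lam)"
    by (rule continuous_on_powr') (use lam_pos in \<open>auto intro!: continuous_intros simp: cbox_interval\<close>)
  ultimately have "continuous_on ({0..} \<times> cbox 0 b) (\<lambda>z. f (fst z + snd z) * snd z powr lam)"
    by (intro continuous_on_mult)
  thus ?thesis by (simp add: case_prod_unfold)
qed

lemma shift_deriv:
  assumes "\<And>s. (f has_real_derivative f' s) (at s)"
  shows "((\<lambda>x. f (x+t) * c) has_real_derivative f' (x+t) * c) (at x within S)"
proof -
  have "((\<lambda>x. f (x+t)) has_real_derivative f' (x+t) * 1) (at x)"
    by (rule DERIV_chain2[OF assms]) (auto intro!: derivative_eq_intros)
  hence "((\<lambda>x. f (x+t) * c) has_real_derivative f' (x+t) * 1 * c) (at x)"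
    by (rule DERIV_cmult_right)
  thus ?thesis by (simp add: has_field_derivative_at_within)
qed

lemma I_deriv_gen:
  assumes fd: "\<And>s. (f has_real_derivative f' s) (at s)"
    and fc: "continuous_on UNIV f" and f'c: "continuous_on UNIV f'" and x: "x \<ge> 0"
  shows "((\<lambda>x. integral {0..b} (\<lambda>u. f (x+u) * u powr lam)) has_real_derivative
           integral {0..b} (\<lambda>u. f' (x+u) * u powr lam)) (at x within {0..})"
proof -
  have "((\<lambda>x. integral (cbox 0 b) (\<lambda>u. f (x+u) * u powr lam)) has_field_derivative
           integral (cbox 0 b) (\<lambda>u. f' (x+u) * u powr lam)) (at x within {0..})"
  proof (rule leibniz_rule_field_derivative[where fx="\<lambda>x u. f' (x+u) * u powr lam"])
    fix x t :: real
    show "((\<lambda>x. f (x+t) * t powr lam) has_field_derivative f' (x+t) * t powr lam) (at x within {0..})"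
      by (rule shift_deriv[OF fd])
  next
    fix x :: real assume "x \<in> {0..}"
    show "(\<lambda>u. f (x+u) * u powr lam) integrable_on cbox 0 b"
      by (rule integrable_continuous) (rule continuous_on_subset[OF kcont_gen[OF fc]], auto simp: cbox_interval)
  next
    show "continuous_on ({0..} \<times> cbox 0 b) (\<lambda>(x, t). f' (x+t) * t powr lam)"
      by (rule kcont2_gen[OF f'c])
  qed (use x in auto)
  thus ?thesis by (simp add: cbox_interval)
qed

definition I0 :: "nat \<Rightarrow> real \<Rightarrow> real" where "I0 n x = integral {0..real n} (k0 x)"
definition I1 :: "nat \<Rightarrow> real \<Rightarrow> real" where "I1 n x = integral {0..real n} (k1 x)"
definition I2 :: "nat \<Rightarrow> real \<Rightarrow> real" where "I2 n x = integral {0..real n} (k2 x)"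

lemma I0_deriv: "x \<ge> 0 \<Longrightarrow> (I0 n has_real_derivative I1 n x) (at x within {0..})"
  unfolding I0_def[abs_def] I1_def k0_def[abs_def] k1_def[abs_def]
  by (rule I_deriv_gen[OF w_deriv w_cont w1_cont])
lemma I1_deriv: "x \<ge> 0 \<Longrightarrow> (I1 n has_real_derivative I2 n x) (at x within {0..})"
  unfolding I1_def[abs_def] I2_def k1_def[abs_def] k2_def[abs_def]
  by (rule I_deriv_gen[OF w1_deriv w1_cont w2_cont])

lemma k0_cont: "continuous_on {0..} (k0 x)" unfolding k0_def[abs_def] by (rule kcont_gen[OF w_cont])
lemma k1_cont: "continuous_on {0..} (k1 x)" unfolding k1_def[abs_def] by (rule kcont_gen[OF w1_cont])
lemma k2_cont: "continuous_on {0..} (k2 x)" unfolding k2_def[abs_def] by (rule kcont_gen[OF w2_cont])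

lemma k0_bnd: "x \<ge> 0 \<Longrightarrow> u \<ge> 0 \<Longrightarrow> \<bar>k0 x u\<bar> \<le> Cb * (1+u) powr (- rr)"
  unfolding k0_def by (rule ker_bound[OF wi_bound(1)])
lemma k1_bnd: "x \<ge> 0 \<Longrightarrow> u \<ge> 0 \<Longrightarrow> \<bar>k1 x u\<bar> \<le> Cb * (1+u) powr (- rr)"
  unfolding k1_def by (rule ker_bound[OF wi_bound(2)])
lemma k2_bnd: "x \<ge> 0 \<Longrightarrow> u \<ge> 0 \<Longrightarrow> \<bar>k2 x u\<bar> \<le> Cb * (1+u) powr (- rr)"
  unfolding k2_def by (rule ker_bound[OF wi_bound(3)])

lemma I_limits:
  obtains L0 L1 L2 where "uniform_limit {0..} I0 L0 sequentially"
    "uniform_limit {0..} I1 L1 sequentially" "uniform_limit {0..} I2 L2 sequentially"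
proof -
  have e0: "(\<lambda>n x. integral {0..real n} (k0 x)) = I0" by (simp add: I0_def[abs_def])
  have e1: "(\<lambda>n x. integral {0..real n} (k1 x)) = I1" by (simp add: I1_def[abs_def])
  have e2: "(\<lambda>n x. integral {0..real n} (k2 x)) = I2" by (simp add: I2_def[abs_def])
  obtain L0 where "uniform_limit {0..} (\<lambda>n x. integral {0..real n} (k0 x)) L0 sequentially"
    using tail_unif[where S="{0..}" and k=k0 and C=Cb and r=rr] k0_cont k0_bnd rr_gt by auto
  hence a: "uniform_limit {0..} I0 L0 sequentially" unfolding e0 .
  obtain L1 where "uniform_limit {0..} (\<lambda>n x. integral {0..real n} (k1 x)) L1 sequentially"
    using tail_unif[where S="{0..}" and k=k1 and C=Cb and r=rr] k1_cont k1_bnd rr_gt by auto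
  hence b: "uniform_limit {0..} I1 L1 sequentially" unfolding e1 .
  obtain L2 where "uniform_limit {0..} (\<lambda>n x. integral {0..real n} (k2 x)) L2 sequentially"
    using tail_unif[where S="{0..}" and k=k2 and C=Cb and r=rr] k2_cont k2_bnd rr_gt by auto
  hence c: "uniform_limit {0..} I2 L2 sequentially" unfolding e2 .
  show ?thesis by (rule that[OF a b c])
qed

end



context prm begin

definition Gf :: "real \<Rightarrow> real \<Rightarrow> real" where
  "Gf x u = u powr lam * (lam * w (x+u) * (2 * c2^2 * (x+u) - c2^2 * u) + aa x * w1 (x+u) + 2 * (mx + kap * x) * w (x+u))"

lemma shift_at:
  assumes "\<And>s. (f has_real_derivative f' s) (at s)"
  shows "((\<lambda>u. f (x+u)) has_real_derivative f' (x+u)) (at u)"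
proof -
  have "((\<lambda>u. f (x+u)) has_real_derivative f' (x+u) * 1) (at u)"
    by (rule DERIV_chain2[OF assms]) (auto intro!: derivative_eq_intros)
  thus ?thesis by simp
qed

lemma shift_cont:
  fixes f :: "real \<Rightarrow> real" and x :: real
  assumes "continuous_on UNIV f" shows "continuous_on S (\<lambda>u. f (x+u))"
proof -
  have "continuous_on S (\<lambda>u. x + u)" by (rule continuous_on_add[OF continuous_on_const continuous_on_id])
  thus ?thesis by (rule continuous_on_compose2[OF assms]) auto
qed

lemma Gf_deriv:
  assumes u: "u > 0"
  shows "(Gf x has_real_derivative u powr lam * (aa x * w2 (x+u) + 2 * (mx + kap * x) * w1 (x+u) - 2 * dl * w (x+u))) (at u)"
proof -
  define b where "b = 2 * (mx + kap * x)"
  define q where "q u = 2 * c2^2 * (x+u) - c2^2 * u" for u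
  define H where "H u = lam * w (x+u) * q u + aa x * w1 (x+u) + b * w (x+u)" for u
  have wx: "\<And>u. ((\<lambda>u. w (x+u)) has_real_derivative w1 (x+u)) (at u)" by (rule shift_at[OF w_deriv])
  have w1x: "\<And>u. ((\<lambda>u. w1 (x+u)) has_real_derivative w2 (x+u)) (at u)" by (rule shift_at[OF w1_deriv])
  have qd: "(q has_real_derivative c2^2) (at u)"
  proof -
    have "(q has_real_derivative 2 * c2^2 * (0 + 1) - c2^2 * 1) (at u)"
      unfolding q_def[abs_def] by (intro DERIV_diff DERIV_cmult DERIV_add DERIV_const DERIV_ident)
    thus ?thesis by simp
  qed
  have t1: "((\<lambda>u. lam * w (x+u) * q u) has_real_derivative (lam * w1 (x+u)) * q u + c2^2 * (lam * w (x+u))) (at u)"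
    by (rule DERIV_mult[OF DERIV_cmult[OF wx] qd])
  have Hd: "(H has_real_derivative ((lam * w1 (x+u)) * q u + c2^2 * (lam * w (x+u))) + aa x * w2 (x+u) + b * w1 (x+u)) (at u)"
    unfolding H_def[abs_def] by (intro DERIV_add t1 DERIV_cmult wx w1x)
  have pd: "((\<lambda>u. u powr lam) has_real_derivative lam * u powr (lam - 1)) (at u)"
    by (rule has_real_derivative_powr[OF u])
  have Gd: "(Gf x has_real_derivative lam * u powr (lam - 1) * H u +
      (((lam * w1 (x+u)) * q u + c2^2 * (lam * w (x+u))) + aa x * w2 (x+u) + b * w1 (x+u)) * u powr lam) (at u)"
  proof -
    have "Gf x = (\<lambda>u. u powr lam * H u)" by (auto simp: Gf_def H_def q_def b_def)
    thus ?thesis using DERIV_mult[OF pd Hd] by simp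
  qed
  have k: "lam * H u + u * (lam * w1 (x+u) * q u + c2^2 * lam * w (x+u)) + 2 * dl * u * w (x+u) = 0"
    using key_id[of x u] by (simp add: H_def q_def b_def)
  have pw: "u powr (lam - 1) = u powr lam / u" using u by (simp add: powr_diff)
  define P where "P = u powr lam"
  have k2: "lam * H u / u = - (lam * w1 (x+u) * q u + c2^2 * lam * w (x+u)) - 2 * dl * w (x+u)"
  proof -
    have "lam * H u = - u * (lam * w1 (x+u) * q u + c2^2 * lam * w (x+u)) - 2 * dl * u * w (x+u)"
      using k by (simp add: algebra_simps)
    thus ?thesis using u by (simp add: field_simps)
  qed
  have "lam * u powr (lam - 1) * H u +
      (((lam * w1 (x+u)) * q u + c2^2 * (lam * w (x+u))) + aa x * w2 (x+u) + b * w1 (x+u)) * u powr lam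
      = P * (lam * H u / u + ((lam * w1 (x+u)) * q u + c2^2 * (lam * w (x+u))) + aa x * w2 (x+u) + b * w1 (x+u))"
    unfolding pw P_def by (simp add: algebra_simps)
  also have "\<dots> = P * (aa x * w2 (x+u) + b * w1 (x+u) - 2 * dl * w (x+u))"
    unfolding k2 by (simp add: algebra_simps)
  finally show ?thesis using Gd by (simp add: P_def b_def)
qed

lemma Gf_cont: "continuous_on S (Gf x)" if "S \<subseteq> {0..}"
proof -
  have "continuous_on S (\<lambda>u. u powr lam)" by (rule continuous_on_subset[OF powr_lam_cont that])
  moreover have "continuous_on S (\<lambda>u. lam * w (x+u) * (2 * c2^2 * (x+u) - c2^2 * u) + aa x * w1 (x+u) + 2 * (mx + kap * x) * w (x+u))"
    by (intro continuous_intros shift_cont w_cont w1_cont)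
  ultimately show ?thesis unfolding Gf_def[abs_def] by (intro continuous_on_mult)
qed

lemma G_int:
  assumes "bb \<ge> 0"
  shows "((\<lambda>u. aa x * k2 x u + 2 * (mx + kap * x) * k1 x u - 2 * dl * k0 x u) has_integral Gf x bb - Gf x 0) {0..bb}"
proof (rule fundamental_theorem_of_calculus_interior[OF assms])
  show "continuous_on {0..bb} (Gf x)" by (rule Gf_cont) auto
  fix u assume "u \<in> {0<..<bb}"
  hence u: "u > 0" by simp
  have "(Gf x has_real_derivative aa x * k2 x u + 2 * (mx + kap * x) * k1 x u - 2 * dl * k0 x u) (at u)"
    using Gf_deriv[OF u, of x] by (simp add: k0_def k1_def k2_def algebra_simps)
  thus "(Gf x has_vector_derivative aa x * k2 x u + 2 * (mx + kap * x) * k1 x u - 2 * dl * k0 x u) (at u)"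
    by (simp add: has_real_derivative_iff_has_vector_derivative)
qed

lemma Gf0: "Gf x 0 = 0" by (simp add: Gf_def)

lemma Gf_k: "Gf x u = lam * (c2^2 * (2 * x + u)) * k0 x u + aa x * k1 x u + 2 * (mx + kap * x) * k0 x u"
  by (simp add: Gf_def k0_def k1_def algebra_simps)

lemma powr_to0: "(\<lambda>n. (1 + real n) powr (1 - rr)) \<longlonglongrightarrow> 0"
proof -
  have "filterlim (\<lambda>n. 1 + real n) at_top sequentially"
    by (intro filterlim_tendsto_add_at_top[OF tendsto_const] filterlim_real_sequentially)
  thus ?thesis using rr_gt by (intro tendsto_neg_powr) auto
qed

lemma Gf_lim:
  assumes x: "x \<ge> 0" shows "(\<lambda>n. Gf x (real n)) \<longlonglongrightarrow> 0"
proof (rule Lim_null_comparison)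
  define M where "M = lam * c2^2 * (2 * x + 1) + aa x + \<bar>2 * (mx + kap * x)\<bar>"
  show "(\<lambda>n. M * Cb * (1 + real n) powr (1 - rr)) \<longlonglongrightarrow> 0"
    using powr_to0 by (intro tendsto_mult_right_zero)
  show "\<forall>\<^sub>F n in sequentially. norm (Gf x (real n)) \<le> M * Cb * (1 + real n) powr (1 - rr)"
  proof (intro always_eventually allI)
    fix n
    define u where "u = real n"
    have u: "u \<ge> 0" by (simp add: u_def)
    define B where "B = Cb * (1+u) powr (- rr)"
    have B0: "B \<ge> 0" using Cb_pos by (simp add: B_def)
    have a0: "\<bar>k0 x u\<bar> \<le> B" using k0_bnd[OF x u] by (simp add: B_def)
    have a1: "\<bar>k1 x u\<bar> \<le> B" using k1_bnd[OF x u] by (simp add: B_def)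
    have c0: "0 \<le> lam * (c2^2 * (2 * x + u))" using lam_pos x u by simp
    have "\<bar>Gf x u\<bar> \<le> \<bar>lam * (c2^2 * (2 * x + u)) * k0 x u\<bar> + \<bar>aa x * k1 x u\<bar> + \<bar>2 * (mx + kap * x) * k0 x u\<bar>"
      unfolding Gf_k by (rule order_trans[OF abs_triangle_ineq add_right_mono[OF abs_triangle_ineq]])
    also have "\<dots> = lam * (c2^2 * (2 * x + u)) * \<bar>k0 x u\<bar> + aa x * \<bar>k1 x u\<bar> + \<bar>2 * (mx + kap * x)\<bar> * \<bar>k0 x u\<bar>"
      using c0 aa_pos[of x] lam_pos x u by (simp add: abs_mult)
    also have "\<dots> \<le> lam * (c2^2 * (2 * x + u)) * B + aa x * B + \<bar>2 * (mx + kap * x)\<bar> * B"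
      using c0 aa_pos[of x] a0 a1 by (intro add_mono mult_left_mono) auto
    also have "\<dots> = (lam * (c2^2 * (2 * x + u)) + aa x + \<bar>2 * (mx + kap * x)\<bar>) * B" by (simp add: algebra_simps)
    also have "\<dots> \<le> (M * (1+u)) * B"
    proof (rule mult_right_mono[OF _ B0])
      have "lam * (c2^2 * (2 * x + u)) \<le> lam * c2^2 * (2 * x + 1) * (1+u)"
      proof -
        have "2 * x + u \<le> (2 * x + 1) * (1+u)" using x u by (simp add: algebra_simps)
        hence "c2^2 * (2 * x + u) \<le> c2^2 * ((2 * x + 1) * (1+u))" by (rule mult_left_mono) simp
        hence "lam * (c2^2 * (2 * x + u)) \<le> lam * (c2^2 * ((2 * x + 1) * (1+u)))"
          by (rule mult_left_mono) (use lam_pos in auto)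
        thus ?thesis by (simp add: mult_ac)
      qed
      moreover have "aa x + \<bar>2 * (mx + kap * x)\<bar> \<le> (aa x + \<bar>2 * (mx + kap * x)\<bar>) * (1+u)"
        using u aa_pos[of x] by (simp add: algebra_simps)
      ultimately show "lam * (c2^2 * (2 * x + u)) + aa x + \<bar>2 * (mx + kap * x)\<bar> \<le> M * (1+u)"
        unfolding M_def by (simp add: algebra_simps)
    qed
    also have "\<dots> = M * Cb * (1 + u) powr (1 - rr)"
    proof -
      have "(1+u) powr (1 + - rr) = (1+u) powr 1 * (1+u) powr (- rr)" by (rule powr_add)
      moreover have "(1+u) powr 1 = 1 + u" using u by simp
      ultimately have "(1+u) powr (1 - rr) = (1+u) * (1+u) powr (- rr)" by simp
      thus ?thesis by (simp add: B_def)
    qed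
    finally show "norm (Gf x (real n)) \<le> M * Cb * (1 + real n) powr (1 - rr)" by (simp add: u_def)
  qed
qed

lemma ode_seq:
  assumes x: "x \<ge> 0"
  shows "aa x * I2 n x + 2 * (mx + kap * x) * I1 n x - 2 * dl * I0 n x = Gf x (real n)"
proof -
  have i: "\<And>k::real\<Rightarrow>real. continuous_on {0..} k \<Longrightarrow> (k has_integral integral {0..real n} k) {0..real n}"
    by (rule integrable_integral, rule integrable_continuous_interval, erule continuous_on_subset) auto
  have "((\<lambda>u. aa x * k2 x u + 2 * (mx + kap * x) * k1 x u - 2 * dl * k0 x u) has_integral
      aa x * I2 n x + 2 * (mx + kap * x) * I1 n x - 2 * dl * I0 n x) {0..real n}"
    unfolding I0_def I1_def I2_def
    by (intro has_integral_diff has_integral_add has_integral_mult_right i k0_cont k1_cont k2_cont)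
  moreover have "((\<lambda>u. aa x * k2 x u + 2 * (mx + kap * x) * k1 x u - 2 * dl * k0 x u) has_integral
      Gf x (real n)) {0..real n}"
    using G_int[of "real n" x] by (simp add: Gf0)
  ultimately show ?thesis by (rule has_integral_unique)
qed

end



context prm begin

lemma k0_nonneg: "u \<ge> 0 \<Longrightarrow> k0 x u \<ge> 0"
  using w_pos[of "x+u"] by (simp add: k0_def)

lemma k0_integrable: "k0 x integrable_on {a..b}" if "a \<ge> 0"
  by (rule integrable_continuous_interval, rule continuous_on_subset[OF k0_cont]) (use that in auto)

lemma I0_inc: "incseq (\<lambda>n. I0 n x)"
proof (rule incseq_SucI)
  fix n
  show "I0 n x \<le> I0 (Suc n) x" unfolding I0_def
    by (rule integral_subset_le) (auto intro: k0_integrable k0_nonneg)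
qed

lemma shift_le:
  assumes x: "x \<ge> 0" and d: "d \<ge> 0" and b: "b \<ge> 0"
  shows "integral {0..b} (k0 (x+d)) \<le> integral {0..b+d} (k0 x)"
proof -
  define f where "f v = w (x+v) * (v-d) powr lam" for v
  have "integral {d-d..b+d-d} (\<lambda>v. f (v + d)) = integral {d..b+d} f"
    by (rule integral_shift_real_ivl)
  moreover have "(\<lambda>v. f (v + d)) = k0 (x+d)"
    by (auto simp: f_def k0_def add_ac)
  ultimately have e: "integral {0..b} (k0 (x+d)) = integral {d..b+d} f" by simp
  have fc: "continuous_on {d..b+d} f"
  proof -
    have "continuous_on {d..b+d} (\<lambda>v. (v-d) powr lam)"
      by (rule continuous_on_powr') (use lam_pos in \<open>auto intro!: continuous_intros\<close>)
    moreover have "continuous_on {d..b+d} (\<lambda>v. w (x+v))" by (rule shift_cont[OF w_cont])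
    ultimately show ?thesis unfolding f_def[abs_def] by (intro continuous_on_mult)
  qed
  have "integral {d..b+d} f \<le> integral {d..b+d} (k0 x)"
  proof (rule integral_le)
    show "f integrable_on {d..b+d}" by (rule integrable_continuous_interval[OF fc])
    show "k0 x integrable_on {d..b+d}" by (rule k0_integrable) (use d in simp)
    fix v assume "v \<in> {d..b+d}"
    hence v: "d \<le> v" by simp
    have "(v-d) powr lam \<le> v powr lam" using v d lam_pos by (intro powr_mono2) auto
    thus "f v \<le> k0 x v" unfolding f_def k0_def using w_pos[of "x+v"] by (intro mult_left_mono) auto
  qed
  also have "\<dots> \<le> integral {0..b+d} (k0 x)"
    by (rule integral_subset_le) (use d b in \<open>auto intro: k0_integrable k0_nonneg\<close>)
  finally show ?thesis using e by simp
qed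

lemma L0_mono:
  assumes L: "\<And>x. x \<ge> 0 \<Longrightarrow> (\<lambda>n. I0 n x) \<longlonglongrightarrow> L0 x"
    and x: "0 \<le> x" and xy: "x \<le> y"
  shows "L0 y \<le> L0 x"
proof (rule LIMSEQ_le_const2[OF L])
  show "0 \<le> y" using x xy by simp
  show "\<exists>N. \<forall>n\<ge>N. I0 n y \<le> L0 x"
  proof (intro exI allI impI)
    fix n :: nat
    define d where "d = y - x"
    have d: "d \<ge> 0" using xy by (simp add: d_def)
    define m where "m = nat \<lceil>real n + d\<rceil>"
    have m: "real n + d \<le> real m" unfolding m_def by linarith
    have "I0 n y = integral {0..real n} (k0 (x+d))" by (simp add: I0_def d_def)
    also have "\<dots> \<le> integral {0..real n + d} (k0 x)" by (rule shift_le[OF x d]) simp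
    also have "\<dots> \<le> integral {0..real m} (k0 x)"
      by (rule integral_subset_le) (use m d in \<open>auto intro: k0_integrable k0_nonneg\<close>)
    also have "\<dots> = I0 m x" by (simp add: I0_def)
    also have "\<dots> \<le> L0 x" by (rule incseq_le[OF I0_inc L[OF x]])
    finally show "I0 n y \<le> L0 x" .
  qed
qed

lemma powr_lam_int: "((\<lambda>u. u powr lam) has_integral 1 / (lam + 1)) {0..1}"
proof -
  define F where "F u = u powr (lam + 1) / (lam + 1)" for u :: real
  have "((\<lambda>u. u powr lam) has_integral F 1 - F 0) {0..1}"
  proof (rule fundamental_theorem_of_calculus_interior)
    show "continuous_on {0..1} F" unfolding F_def[abs_def]
      by (intro continuous_on_divide continuous_on_powr') (use lam_pos in \<open>auto intro!: continuous_intros\<close>)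
    fix u :: real assume "u \<in> {0<..<1}"
    hence u: "u > 0" by simp
    have "(F has_real_derivative (lam + 1) * u powr (lam + 1 - 1) / (lam + 1)) (at u)"
      unfolding F_def[abs_def] by (rule DERIV_cdivide[OF has_real_derivative_powr[OF u]])
    moreover have "(lam + 1) * u powr (lam + 1 - 1) / (lam + 1) = u powr lam" using lam_pos by simp
    ultimately show "(F has_vector_derivative u powr lam) (at u)"
      by (simp add: has_real_derivative_iff_has_vector_derivative)
  qed simp
  moreover have "F 1 - F 0 = 1 / (lam + 1)" using lam_pos by (simp add: F_def)
  ultimately show ?thesis by simp
qed

lemma I0_1_pos: "I0 1 x > 0"
proof -
  obtain s0 where s0: "s0 \<in> {x..x+1}" "\<And>s. s \<in> {x..x+1} \<Longrightarrow> w s0 \<le> w s"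
    using continuous_attains_inf[of "{x..x+1}" w] continuous_on_subset[OF w_cont] by auto
  define \<beta> where "\<beta> = w s0"
  have b0: "\<beta> > 0" by (simp add: \<beta>_def w_pos)
  have "((\<lambda>u. \<beta> * u powr lam) has_integral \<beta> * (1 / (lam + 1))) {0..1}"
    by (rule has_integral_mult_right[OF powr_lam_int])
  moreover have "(k0 x has_integral integral {0..1} (k0 x)) {0..1}"
    by (rule integrable_integral[OF k0_integrable]) simp
  ultimately have "\<beta> * (1 / (lam + 1)) \<le> integral {0..1} (k0 x)"
  proof (rule has_integral_le)
    fix u :: real assume "u \<in> {0..1}"
    hence "\<beta> \<le> w (x+u)" using s0(2)[of "x+u"] by (simp add: \<beta>_def)
    thus "\<beta> * u powr lam \<le> k0 x u" unfolding k0_def by (intro mult_right_mono) auto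
  qed
  moreover have "\<beta> * (1 / (lam + 1)) > 0" using b0 lam_pos by simp
  ultimately show ?thesis by (simp add: I0_def)
qed

lemma exist: "\<exists>f f' f''. ode_sol c1 c2 mx kap dl f f' f'' \<and> prop_P f f'"
proof -
  obtain L0 L1 L2 where U0: "uniform_limit {0..} I0 L0 sequentially"
    and U1: "uniform_limit {0..} I1 L1 sequentially" and U2: "uniform_limit {0..} I2 L2 sequentially"
    by (rule I_limits)
  have cvx: "convex {0::real..}" by (simp add: convex_real_interval)
  have P0: "\<And>x. x \<ge> 0 \<Longrightarrow> (\<lambda>n. I0 n x) \<longlonglongrightarrow> L0 x" using U0 by (intro tendsto_uniform_limitI) auto
  have P1: "\<And>x. x \<ge> 0 \<Longrightarrow> (\<lambda>n. I1 n x) \<longlonglongrightarrow> L1 x" using U1 by (intro tendsto_uniform_limitI) auto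
  have P2: "\<And>x. x \<ge> 0 \<Longrightarrow> (\<lambda>n. I2 n x) \<longlonglongrightarrow> L2 x" using U2 by (intro tendsto_uniform_limitI) auto
  obtain g1 where g1: "\<forall>x\<in>{0..}. (\<lambda>n. I1 n x) \<longlonglongrightarrow> g1 x \<and> (g1 has_real_derivative L2 x) (at x within {0..})"
    using deriv_seq[OF cvx _ U2, of I1 0] I1_deriv P1[of 0] by (auto simp: convergent_def)
  have g1L: "g1 x = L1 x" if "x \<ge> 0" for x
    using g1 P1[OF that] that by (auto intro: LIMSEQ_unique)
  obtain g0 where g0: "\<forall>x\<in>{0..}. (\<lambda>n. I0 n x) \<longlonglongrightarrow> g0 x \<and> (g0 has_real_derivative L1 x) (at x within {0..})"
    using deriv_seq[OF cvx _ U1, of I0 0] I0_deriv P0[of 0] by (auto simp: convergent_def)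
  have g0L: "g0 x = L0 x" if "x \<ge> 0" for x
    using g0 P0[OF that] that by (auto intro: LIMSEQ_unique)
  have d0: "(g0 has_real_derivative g1 x) (at x within {0..})" if "x \<ge> 0" for x
    using g0 that g1L[OF that] by auto
  have d1: "(g1 has_real_derivative L2 x) (at x within {0..})" if "x \<ge> 0" for x
    using g1 that by auto
  have ode: "(c1^2 + c2^2 * x^2) * L2 x + 2 * (mx + kap * x) * g1 x - 2 * dl * g0 x = 0" if x: "x \<ge> 0" for x
  proof -
    have "(\<lambda>n. aa x * I2 n x + 2 * (mx + kap * x) * I1 n x - 2 * dl * I0 n x) \<longlonglongrightarrow>
          aa x * L2 x + 2 * (mx + kap * x) * L1 x - 2 * dl * L0 x"
      by (intro tendsto_intros P0 P1 P2 x)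
    moreover have "(\<lambda>n. aa x * I2 n x + 2 * (mx + kap * x) * I1 n x - 2 * dl * I0 n x) \<longlonglongrightarrow> 0"
      unfolding ode_seq[OF x] by (rule Gf_lim[OF x])
    ultimately have "aa x * L2 x + 2 * (mx + kap * x) * L1 x - 2 * dl * L0 x = 0" by (rule LIMSEQ_unique)
    thus ?thesis using g0L[OF x] g1L[OF x] by (simp add: aa_def)
  qed
  have pos: "g0 x > 0" if x: "x \<ge> 0" for x
  proof -
    have "I0 1 x \<le> L0 x" by (rule incseq_le[OF I0_inc P0[OF x]])
    thus ?thesis using I0_1_pos[of x] g0L[OF x] by simp
  qed
  have mono: "g0 y \<le> g0 x" if "0 \<le> x" "x \<le> y" for x y
    using L0_mono[OF P0 that] g0L that by simp
  have neg: "g1 x \<le> 0" if x: "x > 0" for x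
  proof (rule ccontr)
    assume "\<not> g1 x \<le> 0"
    hence gp: "g1 x > 0" by simp
    have "(g0 has_real_derivative g1 x) (at x)" using within_to_at[OF x d0] x by simp
    from DERIV_pos_inc_right[OF this gp] obtain d where d: "d > 0" "\<And>h. h > 0 \<Longrightarrow> h < d \<Longrightarrow> g0 x < g0 (x + h)"
      by auto
    have "g0 x < g0 (x + d/2)" using d by simp
    moreover have "g0 (x + d/2) \<le> g0 x" using mono[of x "x + d/2"] x d by simp
    ultimately show False by simp
  qed
  have "ode_sol c1 c2 mx kap dl g0 g1 L2" unfolding ode_sol_def using d0 d1 ode by blast
  moreover have "prop_P g0 g1" unfolding prop_P_def using pos neg by blast
  ultimately show ?thesis by blast
qed

end

theorem lemma3:
  fixes mu_xi mu_rho s_xi s_rho kappa_rho delta :: real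
  assumes "s_xi > 0" and "s_rho > 0"
    and "kappa_rho = mu_rho + s_rho^2 / 2"
    and "delta > 0"
  shows "\<exists>f f' f''. ode_sol s_xi s_rho mu_xi kappa_rho delta f f' f'' \<and> prop_P f f' \<and>
           (mu_rho \<le> 0 \<longrightarrow>
              (\<forall>g g' g''. ode_sol s_xi s_rho mu_xi kappa_rho delta g g' g'' \<and> prop_P g g' \<longrightarrow>
                 (\<exists>K>0. \<forall>x\<ge>0. g x = K * f x)))"
proof -
  interpret P: prm s_xi s_rho mu_xi mu_rho kappa_rho delta
    by unfold_locales (use assms in auto)
  obtain f f' f'' where F: "ode_sol s_xi s_rho mu_xi kappa_rho delta f f' f''" "prop_P f f'"
    using P.exist by blast
  have "mu_rho \<le> 0 \<longrightarrow>
              (\<forall>g g' g''. ode_sol s_xi s_rho mu_xi kappa_rho delta g g' g'' \<and> prop_P g g' \<longrightarrow>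
                 (\<exists>K>0. \<forall>x\<ge>0. g x = K * f x))"
    using P.uniq F by blast
  thus ?thesis using F by blast
qed

end
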